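(* Under the setting described in the context, let $f\in C(\Omega)$ and let $$f_{\min}(x)=\frac{\int_\Omega f(y)\psi_h(x-y)\,d\mu(y)}{\int_\Omega \psi_h(x-t)\,d\mu(t)},\qquad x\in\Omega.$$ Then there is a constant $C>0$, independent of $h$, such that for all $0<h<1$ and all $1\le p\le\infty$, $$\|f-f_{\min}\|_{L^p(\Omega)}\le C\,\omega_f(h).$$
   Context: Let $d\ge 1$ and let $\Omega\subset\mathbb{R}^d$ be a compact convex domain with Lipschitz boundary. Let $\mu$ be a probability measure on $\Omega$ such that: (1) there is $C_1>0$ with $\mu(\Omega\cap B(x,\alpha))\ge C_1\, m(B(x,\alpha))$ for all $x\in\Omega$ and $0<\alpha\le 1$ ($B(x,\alpha)$ the Euclidean ball, $m$ Lebesgue measure); (2) $\mu$ extends to a finite positive measure $\mu^*$ on $\mathbb{R}^d$ with $\widehat{\mu^*}\in L^1(\mathbb{R}^d)$. Let $\psi\in C(\mathbb{R}^d)$ be nonnegative with $\int_{\mathbb{R}^d}\psi=1$, $\int_{\mathbb{R}^d}|x|\psi(x)\,dx<\infty$, and $\psi(x)\ge C_\psi>0$ for $|x|\le1$; $\psi_h(x)=h^{-d}\psi(x/h)$. $L^p(\Omega)$ norms are with respect to Lebesgue measure. The modulus of continuity is $\omega_f(t)=\sup\{|f(x)-f(y)|: x,y\in\Omega,\ |x-y|\le t\}$. *)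

theory Defs
  imports "HOL-Analysis.Analysis" "HOL-Probability.Probability"
begin

text \<open>Lipschitz boundary (for a closed domain, described via its interior):
  near every boundary point the interior is, after choosing a unit direction e,
  the strict supergraph of a Lipschitz function defined on the hyperplane orthogonal to e.\<close>
definition lipschitz_boundary :: "'a::euclidean_space set \<Rightarrow> bool" where
  "lipschitz_boundary \<Omega> \<longleftrightarrow>
     (\<forall>x\<in>frontier \<Omega>. \<exists>r>0. \<exists>e::'a. norm e = 1 \<and>
        (\<exists>(g::'a \<Rightarrow> real) L. (\<forall>y z. \<bar>g y - g z\<bar> \<le> L * norm (y - z)) \<and>
           interior \<Omega> \<inter> ball x r = {z \<in> ball x r. z \<bullet> e > g (z - (z \<bullet> e) *\<^sub>R e)}))"

definition fourier_measure :: "'a::euclidean_space measure \<Rightarrow> 'a \<Rightarrow> complex" where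
  "fourier_measure M \<xi> = integral\<^sup>L M (\<lambda>x. cis (- 2 * pi * (x \<bullet> \<xi>)))"

definition psi_scaled :: "('a::euclidean_space \<Rightarrow> real) \<Rightarrow> real \<Rightarrow> 'a \<Rightarrow> real" where
  "psi_scaled \<psi> h x = inverse (h ^ DIM('a)) * \<psi> (inverse h *\<^sub>R x)"

definition f_min :: "'a::euclidean_space measure \<Rightarrow> 'a set \<Rightarrow> ('a \<Rightarrow> real) \<Rightarrow> real
    \<Rightarrow> ('a \<Rightarrow> real) \<Rightarrow> 'a \<Rightarrow> real" where
  "f_min \<mu> \<Omega> \<psi> h f x =
     (LINT y:\<Omega>|\<mu>. f y * psi_scaled \<psi> h (x - y)) / (LINT t:\<Omega>|\<mu>. psi_scaled \<psi> h (x - t))"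

definition modulus :: "'a::euclidean_space set \<Rightarrow> ('a \<Rightarrow> real) \<Rightarrow> real \<Rightarrow> real" where
  "modulus \<Omega> f t = Sup {\<bar>f x - f y\<bar> | x y. x \<in> \<Omega> \<and> y \<in> \<Omega> \<and> norm (x - y) \<le> t}"

definition Lp_norm :: "'a::euclidean_space set \<Rightarrow> ('a \<Rightarrow> real) \<Rightarrow> real \<Rightarrow> real" where
  "Lp_norm \<Omega> g p = (LINT x:\<Omega>|lebesgue. \<bar>g x\<bar> powr p) powr (1 / p)"

definition Linf_norm :: "'a::euclidean_space set \<Rightarrow> ('a \<Rightarrow> real) \<Rightarrow> ereal" where
  "Linf_norm \<Omega> g = esssup (restrict_space lebesgue \<Omega>) (\<lambda>x. ereal \<bar>g x\<bar>)"

end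

theory Submission
  imports Defs
begin

lemma sum_basis_inner:
  fixes f :: "'a::euclidean_space \<Rightarrow> real"
  assumes "b \<in> Basis"
  shows "(\<Sum>b'\<in>Basis. f b' *\<^sub>R b') \<bullet> b = f b"
  using assms by (simp add: inner_sum_left inner_Basis if_distrib sum.delta cong: if_cong)

lemma lborel_prod_integral:
  fixes F :: "'a::euclidean_space \<Rightarrow> real \<Rightarrow> 'b::{real_normed_field,banach,second_countable_topology}"
  assumes int: "\<And>b. b \<in> Basis \<Longrightarrow> integrable lborel (F b)"
  shows "(\<integral>\<xi>. (\<Prod>b\<in>Basis. F b (\<xi> \<bullet> b)) \<partial>(lborel::'a measure)) = (\<Prod>b\<in>Basis. \<integral>t. F b t \<partial>lborel)"
proof -
  interpret product_sigma_finite "\<lambda>_::'a. (lborel::real measure)" by standard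
  have meas: "(\<lambda>\<xi>::'a. \<Prod>b\<in>Basis. F b (\<xi> \<bullet> b)) \<in> borel_measurable borel"
    using int by (intro borel_measurable_prod) (auto dest: borel_measurable_integrable)
  have "(\<integral>\<xi>. (\<Prod>b\<in>Basis. F b (\<xi> \<bullet> b)) \<partial>(lborel::'a measure)) =
     (\<integral>f. (\<Prod>b\<in>Basis. F b ((\<Sum>b'\<in>Basis. f b' *\<^sub>R b') \<bullet> b)) \<partial>(\<Pi>\<^sub>M b\<in>(Basis::'a set). lborel))"
  proof (subst lborel_eq, rule integral_distr)
    show "(\<lambda>f. \<Sum>b\<in>Basis. f b *\<^sub>R b) \<in> (\<Pi>\<^sub>M b\<in>(Basis::'a set). lborel) \<rightarrow>\<^sub>M (borel::'a measure)"
      by measurable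
  qed (rule meas)
  also have "\<dots> = (\<integral>f. (\<Prod>b\<in>Basis. F b (f b)) \<partial>(\<Pi>\<^sub>M b\<in>(Basis::'a set). lborel))"
    by (intro Bochner_Integration.integral_cong refl prod.cong) (simp_all add: sum_basis_inner)
  also have "\<dots> = (\<Prod>b\<in>Basis. \<integral>t. F b t \<partial>lborel)"
    by (rule product_integral_prod) (auto intro: int)
  finally show ?thesis .
qed

lemma lborel_prod_integrable:
  fixes F :: "'a::euclidean_space \<Rightarrow> real \<Rightarrow> 'b::{real_normed_field,banach,second_countable_topology}"
  assumes int: "\<And>b. b \<in> Basis \<Longrightarrow> integrable lborel (F b)"
  shows "integrable (lborel::'a measure) (\<lambda>\<xi>. \<Prod>b\<in>Basis. F b (\<xi> \<bullet> b))"
proof -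
  interpret product_sigma_finite "\<lambda>_::'a. (lborel::real measure)" by standard
  have meas: "(\<lambda>\<xi>::'a. \<Prod>b\<in>Basis. F b (\<xi> \<bullet> b)) \<in> borel_measurable borel"
    using int by (intro borel_measurable_prod) (auto dest: borel_measurable_integrable)
  have T: "(\<lambda>f. \<Sum>b\<in>Basis. f b *\<^sub>R b) \<in> (\<Pi>\<^sub>M b\<in>(Basis::'a set). lborel) \<rightarrow>\<^sub>M (borel::'a measure)"
    by measurable
  have "integrable (\<Pi>\<^sub>M b\<in>(Basis::'a set). lborel) (\<lambda>f. (\<Prod>b\<in>Basis. F b (f b)))"
    by (rule product_integrable_prod) (auto intro: int)
  also have "?this \<longleftrightarrow> integrable (\<Pi>\<^sub>M b\<in>(Basis::'a set). lborel)
      (\<lambda>f. (\<Prod>b\<in>Basis. F b ((\<Sum>b'\<in>Basis. f b' *\<^sub>R b') \<bullet> b)))"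
    by (intro Bochner_Integration.integrable_cong refl prod.cong) (simp_all add: sum_basis_inner)
  finally show ?thesis
    by (subst lborel_eq) (subst integrable_distr_eq[OF T meas], simp)
qed

lemma cis_sum: "finite A \<Longrightarrow> cis (\<Sum>i\<in>A. f i) = (\<Prod>i\<in>A. cis (f i))"
  by (induction A rule: finite_induct) (auto simp: cis_mult[symmetric])

lemma gauss1_int: "integrable lborel (\<lambda>t. complex_of_real (std_normal_density t) * cis (t * a))"
proof (rule Bochner_Integration.integrable_bound)
  show "integrable lborel (std_normal_density)" by simp
  show "(\<lambda>t. complex_of_real (std_normal_density t) * cis (t * a)) \<in> borel_measurable lborel"
    unfolding measurable_lborel2 std_normal_density_def normal_density_def
    by (intro borel_measurable_continuous_onI continuous_intros) auto
  show "AE x in lborel. norm (complex_of_real (std_normal_density x) * cis (x * a)) \<le> norm (std_normal_density x)"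
    by (simp add: norm_mult)
qed

lemma gauss1:
  "(\<integral>t. complex_of_real (std_normal_density t) * cis (t * a) \<partial>lborel) = complex_of_real (exp (-(a^2)/2))"
proof -
  have "char std_normal_distribution a = complex_of_real (exp (-(a^2)/2))"
    by (simp add: char_std_normal_distribution)
  moreover have "char std_normal_distribution a = (\<integral>t. complex_of_real (std_normal_density t) * cis (t * a) \<partial>lborel)"
    unfolding char_def
    by (subst integral_density) (auto simp: scaleR_conv_of_real cis_conv_exp mult.commute)
  ultimately show ?thesis by simp
qed

definition nd :: "'a::euclidean_space \<Rightarrow> real" where
  "nd u = (\<Prod>b\<in>Basis. std_normal_density (u \<bullet> b))"

lemma nd_nonneg: "nd u \<ge> 0"
  unfolding nd_def by (intro prod_nonneg) auto

lemma nd_integrable: "integrable lborel (nd :: 'a::euclidean_space \<Rightarrow> real)"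
  unfolding nd_def[abs_def] by (rule lborel_prod_integrable) simp

lemma nd_integral: "(\<integral>u. nd u \<partial>(lborel :: 'a::euclidean_space measure)) = 1"
  unfolding nd_def[abs_def] by (subst lborel_prod_integral) simp_all

lemma nd_cis_eq: "complex_of_real (nd (\<xi>::'a::euclidean_space)) * cis (\<xi> \<bullet> v) =
   (\<Prod>b\<in>Basis. complex_of_real (std_normal_density (\<xi> \<bullet> b)) * cis ((\<xi> \<bullet> b) * (v \<bullet> b)))"
  by (simp add: nd_def prod.distrib euclidean_inner[of \<xi> v] cis_sum mult.commute inner_commute)

lemma nd_fourier_int: "integrable lborel (\<lambda>\<xi>::'a::euclidean_space. complex_of_real (nd \<xi>) * cis (\<xi> \<bullet> v))"
  unfolding nd_cis_eq by (rule lborel_prod_integrable) (rule gauss1_int)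

lemma nd_fourier: "(\<integral>\<xi>. complex_of_real (nd \<xi>) * cis (\<xi> \<bullet> v) \<partial>(lborel::'a::euclidean_space measure)) =
   (\<Prod>b\<in>(Basis::'a set). complex_of_real (exp (-((v \<bullet> b)^2)/2)))"
  unfolding nd_cis_eq by (subst lborel_prod_integral) (simp_all add: gauss1_int gauss1)

lemma nd_eq_fourier: "complex_of_real (nd (v::'a::euclidean_space)) =
   complex_of_real ((1 / sqrt (2 * pi)) ^ DIM('a)) * (\<integral>\<xi>. complex_of_real (nd \<xi>) * cis (\<xi> \<bullet> v) \<partial>(lborel::'a measure))"
proof -
  have "nd v = (1 / sqrt (2 * pi)) ^ DIM('a) * (\<Prod>b\<in>(Basis::'a set). exp (-((v \<bullet> b)^2)/2))"
    unfolding nd_def std_normal_density_def prod.distrib prod_constant by simp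
  then show ?thesis by (subst nd_fourier) simp
qed

lemma nd_le: "nd (v::'a::euclidean_space) \<le> (1 / sqrt (2 * pi)) ^ DIM('a)"
proof -
  have "nd v \<le> (\<Prod>b\<in>(Basis::'a set). 1 / sqrt (2 * pi))"
    unfolding nd_def std_normal_density_def
    by (intro prod_mono) (auto intro!: divide_right_mono)
  then show ?thesis by simp
qed

lemma nd_continuous: "continuous_on UNIV (nd :: 'a::euclidean_space \<Rightarrow> real)"
  unfolding nd_def std_normal_density_def by (intro continuous_intros) auto

lemma nn_integral_scale:
  fixes F :: "'a::euclidean_space \<Rightarrow> ennreal"
  assumes a: "a > 0" and F[measurable]: "F \<in> borel_measurable borel"
  shows "(\<integral>\<^sup>+\<xi>. F (inverse a *\<^sub>R \<xi>) \<partial>(lborel::'a measure)) = ennreal (a ^ DIM('a)) * (\<integral>\<^sup>+x. F x \<partial>lborel)"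
proof -
  have "(\<integral>\<^sup>+\<xi>. F (inverse a *\<^sub>R \<xi>) \<partial>(lborel::'a measure)) =
     (\<integral>\<^sup>+\<xi>. F (inverse a *\<^sub>R \<xi>) \<partial>(density (distr lborel borel (\<lambda>x. 0 + a *\<^sub>R x)) (\<lambda>_. ennreal (\<bar>a\<bar> ^ DIM('a)))))"
    using lborel_affine[of a "0::'a"] a by simp
  also have "\<dots> = (\<integral>\<^sup>+x. ennreal (\<bar>a\<bar> ^ DIM('a)) * F (inverse a *\<^sub>R (0 + a *\<^sub>R x)) \<partial>lborel)"
    by (subst nn_integral_density) (simp_all add: nn_integral_distr)
  also have "\<dots> = (\<integral>\<^sup>+x. ennreal (a ^ DIM('a)) * F x \<partial>lborel)"
    using a by simp
  also have "\<dots> = ennreal (a ^ DIM('a)) * (\<integral>\<^sup>+x. F x \<partial>lborel)"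
    by (rule nn_integral_cmult) simp
  finally show ?thesis .
qed

lemma nn_integral_shift_scale:
  fixes F :: "'a::euclidean_space \<Rightarrow> ennreal"
  assumes a: "a > 0" and F[measurable]: "F \<in> borel_measurable borel"
  shows "(\<integral>\<^sup>+z. F z \<partial>(lborel::'a measure)) = ennreal (a ^ DIM('a)) * (\<integral>\<^sup>+w. F (y + a *\<^sub>R w) \<partial>lborel)"
proof -
  have "(\<integral>\<^sup>+z. F z \<partial>(lborel::'a measure)) =
     (\<integral>\<^sup>+z. F z \<partial>(density (distr lborel borel (\<lambda>x. y + a *\<^sub>R x)) (\<lambda>_. ennreal (\<bar>a\<bar> ^ DIM('a)))))"
    using lborel_affine[of a y] a by simp
  also have "\<dots> = (\<integral>\<^sup>+x. ennreal (\<bar>a\<bar> ^ DIM('a)) * F (y + a *\<^sub>R x) \<partial>lborel)"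
    by (subst nn_integral_density) (simp_all add: nn_integral_distr)
  also have "\<dots> = ennreal (a ^ DIM('a)) * (\<integral>\<^sup>+w. F (y + a *\<^sub>R w) \<partial>lborel)"
    using a by (subst nn_integral_cmult) simp_all
  finally show ?thesis .
qed

definition gs :: "real \<Rightarrow> 'a::euclidean_space \<Rightarrow> real" where
  "gs s u = inverse (s ^ DIM('a)) * nd (inverse s *\<^sub>R u)"

lemma gs_nonneg: "s > 0 \<Longrightarrow> gs s u \<ge> 0"
  unfolding gs_def by (simp add: nd_nonneg)

lemma gs_continuous: "continuous_on UNIV (gs s :: 'a::euclidean_space \<Rightarrow> real)"
  unfolding gs_def[abs_def] 
  by (intro continuous_intros continuous_on_compose2[OF nd_continuous]) auto

context
  fixes \<mu>s :: "'a::euclidean_space measure"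
  assumes fin: "finite_measure \<mu>s" and sb: "sets \<mu>s = sets borel"
    and fint: "integrable lborel (fourier_measure \<mu>s)"
begin

lemma meas_pair:
  fixes f :: "'a \<times> 'a \<Rightarrow> 'c::topological_space"
  assumes "continuous_on UNIV f"
  shows "f \<in> borel_measurable (\<mu>s \<Otimes>\<^sub>M lborel)"
proof -
  have "sets (\<mu>s \<Otimes>\<^sub>M (lborel::'a measure)) = sets (borel \<Otimes>\<^sub>M (borel::'a measure))"
    by (rule sets_pair_measure_cong) (simp_all add: sb)
  also have "\<dots> = sets (borel :: ('a \<times> 'a) measure)" by (metis borel_prod)
  finally have "measurable (\<mu>s \<Otimes>\<^sub>M (lborel::'a measure)) (borel :: 'c measure) = measurable borel borel"
    by (rule measurable_cong_sets) simp
  then show ?thesis using borel_measurable_continuous_onI[OF assms] by simp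
qed

lemma meas_mus:
  fixes f :: "'a \<Rightarrow> 'c::topological_space"
  assumes "f \<in> borel_measurable borel"
  shows "f \<in> borel_measurable \<mu>s"
  using assms by (subst measurable_cong_sets[OF sb refl])

lemma conv_fourier_bound:
  assumes s: "s > 0"
  shows "norm (\<integral>y. gs s (z - y) \<partial>\<mu>s) \<le> (\<integral>\<xi>. norm (fourier_measure \<mu>s \<xi>) \<partial>lborel)"
proof -
  interpret M: finite_measure \<mu>s by (rule fin)
  interpret P: pair_sigma_finite \<mu>s "lborel :: 'a measure" by unfold_locales
  define c where "c = 1 / sqrt (2 * pi)"
  define d where "d = DIM('a)"
  define K where "K = (\<integral>\<xi>. norm (fourier_measure \<mu>s \<xi>) \<partial>lborel)"
  define \<Phi> where "\<Phi> = (\<lambda>y \<xi> :: 'a. complex_of_real (nd \<xi>) * cis (\<xi> \<bullet> (inverse s *\<^sub>R (z - y))))" 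
  have gs\<Phi>: "complex_of_real (gs s (z - y)) = of_real (inverse (s^d) * c^d) * (\<integral>\<xi>. \<Phi> y \<xi> \<partial>lborel)" for y
    unfolding gs_def of_real_mult
    by (subst nd_eq_fourier) (simp add: \<Phi>_def c_def d_def)
  have cont\<Phi>: "continuous_on UNIV (\<lambda>p::'a\<times>'a. \<Phi> (fst p) (snd p))"
    unfolding \<Phi>_def
    by (intro continuous_intros continuous_on_compose2[OF nd_continuous]) auto
  have norm\<Phi>: "norm (\<Phi> y \<xi>) = nd \<xi>" for y \<xi>
    by (simp add: \<Phi>_def norm_mult nd_nonneg)
  have int\<Phi>: "integrable (\<mu>s \<Otimes>\<^sub>M lborel) (case_prod \<Phi>)"
  proof (rule P.Fubini_integrable)
    show "case_prod \<Phi> \<in> borel_measurable (\<mu>s \<Otimes>\<^sub>M lborel)"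
      using meas_pair[OF cont\<Phi>] by (simp add: case_prod_beta')
    show "integrable \<mu>s (\<lambda>x. \<integral>y. norm (case_prod \<Phi> (x, y)) \<partial>lborel)"
      by (simp add: norm\<Phi> nd_integral)
    show "AE x in \<mu>s. integrable lborel (\<lambda>y. case_prod \<Phi> (x, y))"
    proof (rule AE_I2)
      fix x show "integrable lborel (\<lambda>y. case_prod \<Phi> (x, y))"
        using nd_fourier_int[of "inverse s *\<^sub>R (z - x)"] by (simp add: \<Phi>_def)
    qed
  qed
  have inner: "(\<integral>y. \<Phi> y \<xi> \<partial>\<mu>s) = complex_of_real (nd \<xi>) * cis (\<xi> \<bullet> (inverse s *\<^sub>R z)) *
      fourier_measure \<mu>s (inverse (2 * pi * s) *\<^sub>R \<xi>)" for \<xi>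
  proof -
    have "\<Phi> y \<xi> = complex_of_real (nd \<xi>) * cis (\<xi> \<bullet> (inverse s *\<^sub>R z)) *
       cis (- 2 * pi * (y \<bullet> (inverse (2 * pi * s) *\<^sub>R \<xi>)))" for y
    proof -
      have "\<xi> \<bullet> (inverse s *\<^sub>R (z - y)) = \<xi> \<bullet> (inverse s *\<^sub>R z) + (- 2 * pi * (y \<bullet> (inverse (2 * pi * s) *\<^sub>R \<xi>)))"
        using s by (simp add: inner_diff_right inner_commute field_simps)
      note eqn = this
      show ?thesis by (simp only: \<Phi>_def eqn mult.assoc cis_mult)
    qed
    then show ?thesis
      by (simp add: fourier_measure_def)
  qed
  have int2: "integrable lborel (\<lambda>\<xi>. \<integral>y. \<Phi> y \<xi> \<partial>\<mu>s)"
    using P.integrable_snd[OF int\<Phi>] .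
  have fmeas[measurable]: "(\<lambda>\<xi>. fourier_measure \<mu>s \<xi>) \<in> borel_measurable borel"
    using borel_measurable_integrable[OF fint] by simp
  have "norm (\<integral>\<xi>. (\<integral>y. \<Phi> y \<xi> \<partial>\<mu>s) \<partial>lborel) \<le> (\<integral>\<^sup>+\<xi>. norm (\<integral>y. \<Phi> y \<xi> \<partial>\<mu>s) \<partial>lborel)"
    by (rule integral_norm_bound_ennreal[OF int2])
  also have "\<dots> \<le> (\<integral>\<^sup>+\<xi>. ennreal (c^d) * norm (fourier_measure \<mu>s (inverse (2 * pi * s) *\<^sub>R \<xi>)) \<partial>lborel)"
  proof (rule nn_integral_mono)
    fix \<xi> :: 'a
    have "norm (\<integral>y. \<Phi> y \<xi> \<partial>\<mu>s) = nd \<xi> * norm (fourier_measure \<mu>s (inverse (2 * pi * s) *\<^sub>R \<xi>))"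
      unfolding inner by (simp add: norm_mult nd_nonneg)
    also have "\<dots> \<le> c^d * norm (fourier_measure \<mu>s (inverse (2 * pi * s) *\<^sub>R \<xi>))"
      by (intro mult_right_mono) (simp_all add: nd_le c_def d_def)
    finally show "ennreal (norm (\<integral>y. \<Phi> y \<xi> \<partial>\<mu>s)) \<le> ennreal (c^d) * ennreal (norm (fourier_measure \<mu>s (inverse (2 * pi * s) *\<^sub>R \<xi>)))"
      by (simp add: ennreal_mult'[symmetric] c_def)
  qed
  also have "\<dots> = ennreal (c^d) * (\<integral>\<^sup>+\<xi>. norm (fourier_measure \<mu>s (inverse (2 * pi * s) *\<^sub>R \<xi>)) \<partial>lborel)"
    by (rule nn_integral_cmult) measurable
  also have "(\<integral>\<^sup>+\<xi>. norm (fourier_measure \<mu>s (inverse (2 * pi * s) *\<^sub>R \<xi>)) \<partial>lborel) =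
      ennreal ((2 * pi * s) ^ d) * (\<integral>\<^sup>+\<xi>. norm (fourier_measure \<mu>s \<xi>) \<partial>lborel)"
    unfolding d_def using s by (intro nn_integral_scale[where F="\<lambda>\<xi>. ennreal (norm (fourier_measure \<mu>s \<xi>))"]) simp_all
  also have "(\<integral>\<^sup>+\<xi>. norm (fourier_measure \<mu>s \<xi>) \<partial>lborel) = ennreal K"
    unfolding K_def by (rule nn_integral_eq_integral) (simp_all add: fint integrable_norm)
  finally have bound: "norm (\<integral>\<xi>. (\<integral>y. \<Phi> y \<xi> \<partial>\<mu>s) \<partial>lborel) \<le> c^d * (2 * pi * s) ^ d * K"
    using s by (simp add: ennreal_mult'[symmetric] K_def c_def mult.assoc)
  have "complex_of_real (\<integral>y. gs s (z - y) \<partial>\<mu>s) = (\<integral>y. complex_of_real (gs s (z - y)) \<partial>\<mu>s)"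
    by simp
  also have "\<dots> = of_real (inverse (s^d) * c^d) * (\<integral>y. (\<integral>\<xi>. \<Phi> y \<xi> \<partial>lborel) \<partial>\<mu>s)"
    unfolding gs\<Phi> by simp
  also have "(\<integral>y. (\<integral>\<xi>. \<Phi> y \<xi> \<partial>lborel) \<partial>\<mu>s) = (\<integral>\<xi>. (\<integral>y. \<Phi> y \<xi> \<partial>\<mu>s) \<partial>lborel)"
    using P.Fubini_integral[OF int\<Phi>] by simp
  finally have eq: "complex_of_real (\<integral>y. gs s (z - y) \<partial>\<mu>s) = of_real (inverse (s^d) * c^d) * (\<integral>\<xi>. (\<integral>y. \<Phi> y \<xi> \<partial>\<mu>s) \<partial>lborel)" .
  have kpos: "inverse (s^d) * c^d \<ge> 0" using s by (simp add: c_def)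
  have "norm (\<integral>y. gs s (z - y) \<partial>\<mu>s) = norm (complex_of_real (\<integral>y. gs s (z - y) \<partial>\<mu>s))"
    by (simp only: norm_of_real real_norm_def)
  also have "\<dots> = (inverse (s^d) * c^d) * norm (\<integral>\<xi>. (\<integral>y. \<Phi> y \<xi> \<partial>\<mu>s) \<partial>lborel)"
    unfolding eq norm_mult norm_of_real using kpos by simp
  also have "\<dots> \<le> inverse (s^d) * c^d * (c^d * (2 * pi * s) ^ d * K)"
    by (rule mult_left_mono[OF bound kpos])
  also have "inverse (s^d) * c^d * (c^d * (2 * pi * s) ^ d * K) = (inverse s * c * c * (2 * pi * s)) ^ d * K"
    by (simp add: power_mult_distrib power_inverse)
  also have "inverse s * c * c * (2 * pi * s) = 1"
    using s by (simp add: c_def)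
  finally show ?thesis by (simp add: K_def)
qed

end

lemma approx_lim:
  fixes \<phi> :: "'a::euclidean_space \<Rightarrow> real"
  assumes cont: "continuous_on UNIV \<phi>" and bnd: "\<And>x. \<bar>\<phi> x\<bar> \<le> M"
  shows "(\<lambda>n. \<integral>w. \<phi> (y + (1 / real (Suc n)) *\<^sub>R w) * nd w \<partial>lborel) \<longlonglongrightarrow> \<phi> y"
proof -
  have "(\<lambda>n. \<integral>w. \<phi> (y + (1 / real (Suc n)) *\<^sub>R w) * nd w \<partial>lborel) \<longlonglongrightarrow> (\<integral>w. \<phi> y * nd w \<partial>(lborel::'a measure))"
  proof (rule integral_dominated_convergence[where w="\<lambda>w. M * nd w" and s="\<lambda>n w. \<phi> (y + (1 / real (Suc n)) *\<^sub>R w) * nd w" and f="\<lambda>w. \<phi> y * nd w"])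
    have "continuous_on UNIV (\<lambda>w. \<phi> y * nd w)" by (intro continuous_intros nd_continuous)
    then show "(\<lambda>w. \<phi> y * nd w) \<in> borel_measurable lborel"
      using borel_measurable_continuous_onI by simp
    show "(\<lambda>w. \<phi> (y + (1 / real (Suc n)) *\<^sub>R w) * nd w) \<in> borel_measurable lborel" for n
    proof -
      have "continuous_on UNIV (\<lambda>w. \<phi> (y + (1 / real (Suc n)) *\<^sub>R w) * nd w)"
        by (intro continuous_intros continuous_on_compose2[OF cont] nd_continuous) auto
      then show ?thesis using borel_measurable_continuous_onI by simp
    qed
    show "integrable lborel (\<lambda>w::'a. M * nd w)"
      by (rule integrable_mult_right[OF nd_integrable])
    show "AE w in lborel. (\<lambda>n. \<phi> (y + (1 / real (Suc n)) *\<^sub>R w) * nd w) \<longlonglongrightarrow> \<phi> y * nd w"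
    proof (rule AE_I2)
      fix w :: 'a
      have "(\<lambda>n. y + (1 / real (Suc n)) *\<^sub>R w) \<longlonglongrightarrow> y + 0 *\<^sub>R w"
        using LIMSEQ_inverse_real_of_nat by (intro tendsto_intros) (simp add: inverse_eq_divide)
      then have "(\<lambda>n. \<phi> (y + (1 / real (Suc n)) *\<^sub>R w)) \<longlonglongrightarrow> \<phi> y"
        using cont by (intro continuous_on_tendsto_compose[OF cont]) auto
      then show "(\<lambda>n. \<phi> (y + (1 / real (Suc n)) *\<^sub>R w) * nd w) \<longlonglongrightarrow> \<phi> y * nd w"
        by (intro tendsto_intros)
    qed
    show "AE w in lborel. norm (\<phi> (y + (1 / real (Suc n)) *\<^sub>R w) * nd w) \<le> M * nd (w::'a)" for n
      using bnd by (intro AE_I2) (simp add: abs_mult nd_nonneg mult_right_mono)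
  qed
  then show ?thesis by (simp add: nd_integral)
qed

context
  fixes \<mu>s :: "'a::euclidean_space measure"
  assumes fin: "finite_measure \<mu>s" and sb: "sets \<mu>s = sets borel"
    and fint: "integrable lborel (fourier_measure \<mu>s)"
begin

lemma gs_int_bound:
  assumes s: "s > 0"
  shows "(\<integral>\<^sup>+y. ennreal (gs s (z - y)) \<partial>\<mu>s) \<le> ennreal (\<integral>\<xi>. norm (fourier_measure \<mu>s \<xi>) \<partial>lborel)"
proof -
  interpret M: finite_measure \<mu>s by (rule fin)
  have cont: "continuous_on UNIV (\<lambda>y. gs s (z - y))"
    by (intro continuous_on_compose2[OF gs_continuous] continuous_intros) auto
  have int: "integrable \<mu>s (\<lambda>y. gs s (z - y))"
  proof (rule M.integrable_const_bound[where B="inverse (s ^ DIM('a)) * (1 / sqrt (2 * pi)) ^ DIM('a)"])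
    show "AE x in \<mu>s. norm (gs s (z - x)) \<le> inverse (s ^ DIM('a)) * (1 / sqrt (2 * pi)) ^ DIM('a)"
      using s by (intro AE_I2) (simp add: gs_def nd_nonneg nd_le mult_left_mono)
    show "(\<lambda>y. gs s (z - y)) \<in> borel_measurable \<mu>s"
      by (rule meas_mus[OF fin sb fint borel_measurable_continuous_onI[OF cont]])
  qed
  have "(\<integral>\<^sup>+y. ennreal (gs s (z - y)) \<partial>\<mu>s) = ennreal (\<integral>y. gs s (z - y) \<partial>\<mu>s)"
    using s by (intro nn_integral_eq_integral int) (simp add: gs_nonneg)
  also have "\<dots> \<le> ennreal (\<integral>\<xi>. norm (fourier_measure \<mu>s \<xi>) \<partial>lborel)"
    using conv_fourier_bound[OF fin sb fint s, of z] by (intro ennreal_leI) simp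
  finally show ?thesis .
qed

lemma key_bound:
  fixes \<phi> :: "'a \<Rightarrow> real"
  assumes cont: "continuous_on UNIV \<phi>" and nn: "\<And>x. \<phi> x \<ge> 0" and bnd: "\<And>x. \<phi> x \<le> M"
  shows "(\<integral>\<^sup>+y. ennreal (\<phi> y) \<partial>\<mu>s) \<le> ennreal (\<integral>\<xi>. norm (fourier_measure \<mu>s \<xi>) \<partial>lborel) * (\<integral>\<^sup>+z. ennreal (\<phi> z) \<partial>lborel)"
proof -
  interpret M: finite_measure \<mu>s by (rule fin)
  interpret P: pair_sigma_finite \<mu>s "lborel :: 'a measure" by unfold_locales
  define K where "K = (\<integral>\<xi>. norm (fourier_measure \<mu>s \<xi>) \<partial>lborel)"
  define s where "s n = 1 / real (Suc n)" for n
  have spos: "s n > 0" for n by (simp add: s_def)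
  define B where "B n y = (\<integral>\<^sup>+z. ennreal (\<phi> z * gs (s n) (z - y)) \<partial>lborel)" for n y
  have \<phi>meas[measurable]: "\<phi> \<in> borel_measurable borel"
    by (rule borel_measurable_continuous_onI[OF cont])
  have pmeas: "(\<lambda>p::'a\<times>'a. \<phi> (snd p) * gs (s n) (snd p - fst p)) \<in> borel_measurable (\<mu>s \<Otimes>\<^sub>M lborel)" for n
    by (rule meas_pair[OF fin sb fint])
       (intro continuous_intros continuous_on_compose2[OF cont] continuous_on_compose2[OF gs_continuous], auto)
  have pmeas': "case_prod (\<lambda>y z. ennreal (\<phi> z * gs (s n) (z - y))) \<in> borel_measurable (\<mu>s \<Otimes>\<^sub>M lborel)" for n
    using measurable_compose[OF pmeas[of n] measurable_ennreal] by (simp add: case_prod_beta' o_def)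
  have Bmeas: "B n \<in> borel_measurable \<mu>s" for n
    unfolding B_def[abs_def] by (rule lborel.borel_measurable_nn_integral[OF pmeas'])
  have AB: "ennreal (\<integral>w. \<phi> (y + s n *\<^sub>R w) * nd w \<partial>lborel) = B n y" for n y
  proof -
    have intw: "integrable lborel (\<lambda>w. \<phi> (y + s n *\<^sub>R w) * nd w)"
    proof (rule Bochner_Integration.integrable_bound[OF integrable_mult_right[OF nd_integrable, of M]])
      have "continuous_on UNIV (\<lambda>w. \<phi> (y + s n *\<^sub>R w) * nd w)"
        by (intro continuous_intros continuous_on_compose2[OF cont] nd_continuous) auto
      then show "(\<lambda>w. \<phi> (y + s n *\<^sub>R w) * nd w) \<in> borel_measurable lborel"
        using borel_measurable_continuous_onI by simp
      show "AE x in lborel. norm (\<phi> (y + s n *\<^sub>R x) * nd x) \<le> norm (M * nd x)"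
        using nn bnd by (intro AE_I2) (auto simp: abs_mult nd_nonneg intro!: mult_right_mono order_trans[OF bnd abs_ge_self])
    qed
    define F where "F = (\<lambda>z. ennreal (\<phi> z * gs (s n) (z - y)))"
    have Fm: "F \<in> borel_measurable borel"
    proof -
      have "continuous_on UNIV (\<lambda>z. \<phi> z * gs (s n) (z - y))"
        by (intro continuous_intros continuous_on_compose2[OF cont] continuous_on_compose2[OF gs_continuous]) auto
      then show ?thesis unfolding F_def
        by (intro measurable_compose[OF _ measurable_ennreal] borel_measurable_continuous_onI)
    qed
    have Fm2: "(\<lambda>w. F (y + s n *\<^sub>R w)) \<in> borel_measurable borel"
      by (intro measurable_compose[OF _ Fm]) simp
    have "B n y = ennreal (s n ^ DIM('a)) * (\<integral>\<^sup>+w. F (y + s n *\<^sub>R w) \<partial>lborel)"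
      unfolding B_def F_def[symmetric] by (rule nn_integral_shift_scale[OF spos Fm])
    also have "\<dots> = (\<integral>\<^sup>+w. ennreal (s n ^ DIM('a)) * F (y + s n *\<^sub>R w) \<partial>lborel)"
      by (rule nn_integral_cmult[symmetric]) (simp add: Fm2)
    also have "\<dots> = (\<integral>\<^sup>+w. ennreal (\<phi> (y + s n *\<^sub>R w) * nd w) \<partial>lborel)"
    proof (rule nn_integral_cong)
      fix w :: 'a
      have "s n ^ DIM('a) * (\<phi> (y + s n *\<^sub>R w) * gs (s n) (y + s n *\<^sub>R w - y)) = \<phi> (y + s n *\<^sub>R w) * nd w"
        using spos[of n] by (simp add: gs_def)
      note eq = this
      have "ennreal (s n ^ DIM('a)) * F (y + s n *\<^sub>R w) = ennreal (s n ^ DIM('a) * (\<phi> (y + s n *\<^sub>R w) * gs (s n) (y + s n *\<^sub>R w - y)))"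
      proof -
        have a: "0 \<le> \<phi> (y + s n *\<^sub>R w)" by (rule nn)
        have b: "0 \<le> gs (s n) (y + s n *\<^sub>R w - y)" by (rule gs_nonneg[OF spos])
        have c: "0 \<le> s n ^ DIM('a)" using spos[of n] by simp
        show ?thesis unfolding F_def
          using ennreal_mult[OF c mult_nonneg_nonneg[OF a b]] by simp
      qed
      then show "ennreal (s n ^ DIM('a)) * F (y + s n *\<^sub>R w) = ennreal (\<phi> (y + s n *\<^sub>R w) * nd w)"
        by (simp only: eq)
    qed
    also have "\<dots> = ennreal (\<integral>w. \<phi> (y + s n *\<^sub>R w) * nd w \<partial>lborel)"
      using nn by (intro nn_integral_eq_integral intw) (simp add: nd_nonneg)
    finally show ?thesis by simp
  qed
  have lim: "ennreal (\<phi> y) = liminf (\<lambda>n. B n y)" for y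
  proof -
    have "(\<lambda>n. ennreal (\<integral>w. \<phi> (y + s n *\<^sub>R w) * nd w \<partial>lborel)) \<longlonglongrightarrow> ennreal (\<phi> y)"
      unfolding s_def using nn bnd by (intro tendsto_ennrealI approx_lim[OF cont, where M=M]) (simp add: abs_of_nonneg)
    then have "liminf (\<lambda>n. ennreal (\<integral>w. \<phi> (y + s n *\<^sub>R w) * nd w \<partial>lborel)) = ennreal (\<phi> y)"
      by (intro lim_imp_Liminf) simp_all
    then show ?thesis unfolding AB by simp
  qed
  have each: "(\<integral>\<^sup>+y. B n y \<partial>\<mu>s) \<le> ennreal K * (\<integral>\<^sup>+z. ennreal (\<phi> z) \<partial>lborel)" for n
  proof -
    have "(\<integral>\<^sup>+y. B n y \<partial>\<mu>s) = (\<integral>\<^sup>+z. (\<integral>\<^sup>+y. ennreal (\<phi> z * gs (s n) (z - y)) \<partial>\<mu>s) \<partial>lborel)"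
      unfolding B_def by (rule P.Fubini'[OF pmeas', symmetric])
    also have "\<dots> = (\<integral>\<^sup>+z. ennreal (\<phi> z) * (\<integral>\<^sup>+y. ennreal (gs (s n) (z - y)) \<partial>\<mu>s) \<partial>lborel)"
    proof (rule nn_integral_cong)
      fix z :: 'a
      have "(\<integral>\<^sup>+y. ennreal (\<phi> z * gs (s n) (z - y)) \<partial>\<mu>s) = (\<integral>\<^sup>+y. ennreal (\<phi> z) * ennreal (gs (s n) (z - y)) \<partial>\<mu>s)"
        by (intro nn_integral_cong) (simp add: ennreal_mult nn gs_nonneg[OF spos])
      also have "\<dots> = ennreal (\<phi> z) * (\<integral>\<^sup>+y. ennreal (gs (s n) (z - y)) \<partial>\<mu>s)"
      proof (rule nn_integral_cmult)
        have "continuous_on UNIV (\<lambda>y. gs (s n) (z - y))"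
          by (intro continuous_on_compose2[OF gs_continuous] continuous_intros) auto
        then show "(\<lambda>y. ennreal (gs (s n) (z - y))) \<in> borel_measurable \<mu>s"
          by (intro measurable_compose[OF _ measurable_ennreal] meas_mus[OF fin sb fint borel_measurable_continuous_onI])
      qed
      finally show "(\<integral>\<^sup>+y. ennreal (\<phi> z * gs (s n) (z - y)) \<partial>\<mu>s) = ennreal (\<phi> z) * (\<integral>\<^sup>+y. ennreal (gs (s n) (z - y)) \<partial>\<mu>s)" .
    qed
    also have "\<dots> \<le> (\<integral>\<^sup>+z. ennreal (\<phi> z) * ennreal K \<partial>lborel)"
      by (intro nn_integral_mono mult_left_mono gs_int_bound[OF spos, unfolded K_def[symmetric]]) simp
    also have "\<dots> = ennreal K * (\<integral>\<^sup>+z. ennreal (\<phi> z) \<partial>lborel)"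
      by (subst nn_integral_multc) (simp_all add: mult.commute)
    finally show ?thesis .
  qed
  have "(\<integral>\<^sup>+y. ennreal (\<phi> y) \<partial>\<mu>s) = (\<integral>\<^sup>+y. liminf (\<lambda>n. B n y) \<partial>\<mu>s)"
    by (simp add: lim)
  also have "\<dots> \<le> liminf (\<lambda>n. \<integral>\<^sup>+y. B n y \<partial>\<mu>s)"
    by (rule nn_integral_liminf[OF Bmeas])
  also have "\<dots> \<le> liminf (\<lambda>n. ennreal K * (\<integral>\<^sup>+z. ennreal (\<phi> z) \<partial>lborel))"
    by (intro Liminf_mono always_eventually allI each)
  also have "\<dots> = ennreal K * (\<integral>\<^sup>+z. ennreal (\<phi> z) \<partial>lborel)"
    by (simp add: Liminf_const)
  finally show ?thesis unfolding K_def .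
qed

end

lemma modulus_bdd:
  fixes f :: "'a::euclidean_space \<Rightarrow> real"
  assumes "compact \<Omega>" "continuous_on \<Omega> f"
  shows "bdd_above {\<bar>f x - f y\<bar> | x y. x \<in> \<Omega> \<and> y \<in> \<Omega> \<and> norm (x - y) \<le> t}"
proof -
  obtain B where B: "\<And>x. x \<in> \<Omega> \<Longrightarrow> norm (f x) \<le> B"
    using continuous_on_compact_bound[OF assms] by blast
  show ?thesis
  proof (rule bdd_aboveI[where M="2 * B"])
    fix z assume "z \<in> {\<bar>f x - f y\<bar> | x y. x \<in> \<Omega> \<and> y \<in> \<Omega> \<and> norm (x - y) \<le> t}"
    then obtain x y where "z = \<bar>f x - f y\<bar>" "x \<in> \<Omega>" "y \<in> \<Omega>" by blast
    with B[of x] B[of y] show "z \<le> 2 * B" by auto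
  qed
qed

lemma modulus_le:
  fixes f :: "'a::euclidean_space \<Rightarrow> real"
  assumes "compact \<Omega>" "continuous_on \<Omega> f" "a \<in> \<Omega>" "b \<in> \<Omega>" "norm (a - b) \<le> t"
  shows "\<bar>f a - f b\<bar> \<le> modulus \<Omega> f t"
  unfolding modulus_def
  by (rule cSup_upper[OF _ modulus_bdd[OF assms(1,2)]]) (use assms in blast)

lemma modulus_nonneg:
  fixes f :: "'a::euclidean_space \<Rightarrow> real"
  assumes "compact \<Omega>" "continuous_on \<Omega> f" "a \<in> \<Omega>" "t \<ge> 0"
  shows "modulus \<Omega> f t \<ge> 0"
  using modulus_le[OF assms(1,2,3,3)] assms(4) by simp

lemma modulus_sub:
  fixes f :: "'a::euclidean_space \<Rightarrow> real"
  assumes cpt: "compact \<Omega>" and cvx: "convex \<Omega>" and cont: "continuous_on \<Omega> f"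
    and h: "h > 0" and x: "x \<in> \<Omega>" and y: "y \<in> \<Omega>"
  shows "\<bar>f x - f y\<bar> \<le> modulus \<Omega> f h * (1 + norm (x - y) / h)"
proof -
  define n where "n = nat \<lceil>norm (x - y) / h\<rceil>"
  have w0: "modulus \<Omega> f h \<ge> 0" using modulus_nonneg[OF cpt cont x] h by simp
  show ?thesis
  proof (cases "n = 0")
    case True
    then have "norm (x - y) / h \<le> 0" unfolding n_def by simp
    then have "x = y" using h by (simp add: divide_le_0_iff)
    then show ?thesis using w0 by simp
  next
    case False
    then have npos: "n > 0" by simp
    have nge: "real n \<ge> norm (x - y) / h" unfolding n_def by (rule real_nat_ceiling_ge)
    have "0 \<le> norm (x - y) / h" using h by simp
    then have nle: "real n \<le> 1 + norm (x - y) / h" unfolding n_def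
      using ceiling_correct[of "norm (x - y) / h"] by (simp add: of_nat_nat)
    define p where "p k = x + (real k / real n) *\<^sub>R (y - x)" for k
    have pin: "p k \<in> \<Omega>" if "k \<le> n" for k
    proof -
      have "p k = (1 - real k / real n) *\<^sub>R x + (real k / real n) *\<^sub>R y"
        unfolding p_def by (simp add: algebra_simps)
      moreover have "0 \<le> real k / real n" "real k / real n \<le> 1" using that npos by auto
      ultimately show ?thesis using cvx x y unfolding convex_alt by (metis add.commute)
    qed
    have pstep: "norm (p (Suc k) - p k) \<le> h" for k
    proof -
      have "p (Suc k) - p k = (real (Suc k) / real n - real k / real n) *\<^sub>R (y - x)"
        unfolding p_def by (simp only: scaleR_diff_left) simp
      also have "real (Suc k) / real n - real k / real n = 1 / real n"
        by (simp add: diff_divide_distrib[symmetric])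
      finally have "p (Suc k) - p k = (1 / real n) *\<^sub>R (y - x)" .
      then have "norm (p (Suc k) - p k) = norm (x - y) / real n"
        by (simp add: norm_minus_commute)
      also have "\<dots> \<le> h" using nge npos h by (simp add: divide_le_eq mult.commute pos_divide_le_eq)
      finally show ?thesis .
    qed
    have p0: "p 0 = x" and pn: "p n = y" unfolding p_def using npos by auto
    have "f y - f x = (\<Sum>k<n. f (p (Suc k)) - f (p k))"
      by (subst sum_lessThan_telescope) (simp add: p0 pn)
    then have "\<bar>f x - f y\<bar> \<le> (\<Sum>k<n. \<bar>f (p (Suc k)) - f (p k)\<bar>)"
      by (metis abs_minus_commute sum_abs)
    also have "\<dots> \<le> (\<Sum>k<n. modulus \<Omega> f h)"
      by (intro sum_mono modulus_le[OF cpt cont] pin pstep) auto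
    also have "\<dots> = real n * modulus \<Omega> f h" by simp
    also have "\<dots> \<le> (1 + norm (x - y) / h) * modulus \<Omega> f h"
      by (rule mult_right_mono[OF nle w0])
    finally show ?thesis by (simp add: mult.commute)
  qed
qed

lemma nn_integral_shift_scale':
  fixes F :: "'a::euclidean_space \<Rightarrow> ennreal"
  assumes a: "a \<noteq> 0" and F[measurable]: "F \<in> borel_measurable borel"
  shows "(\<integral>\<^sup>+z. F z \<partial>(lborel::'a measure)) = ennreal (\<bar>a\<bar> ^ DIM('a)) * (\<integral>\<^sup>+w. F (y + a *\<^sub>R w) \<partial>lborel)"
proof -
  have "(\<integral>\<^sup>+z. F z \<partial>(lborel::'a measure)) =
     (\<integral>\<^sup>+z. F z \<partial>(density (distr lborel borel (\<lambda>x. y + a *\<^sub>R x)) (\<lambda>_. ennreal (\<bar>a\<bar> ^ DIM('a)))))"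
    using lborel_affine[of a y] a by simp
  also have "\<dots> = (\<integral>\<^sup>+x. ennreal (\<bar>a\<bar> ^ DIM('a)) * F (y + a *\<^sub>R x) \<partial>lborel)"
    by (subst nn_integral_density) (simp_all add: nn_integral_distr)
  also have "\<dots> = ennreal (\<bar>a\<bar> ^ DIM('a)) * (\<integral>\<^sup>+w. F (y + a *\<^sub>R w) \<partial>lborel)"
    by (subst nn_integral_cmult) simp_all
  finally show ?thesis .
qed

lemma set_integrable_cont:
  fixes G :: "'a::euclidean_space \<Rightarrow> real"
  assumes M: "finite_measure M" and sM: "sets M = sets borel" and cpt: "compact \<Omega>" and G: "continuous_on \<Omega> G"
  shows "set_integrable M \<Omega> G"
proof -
  interpret finite_measure M by (rule M)
  obtain B where B: "\<And>x. x \<in> \<Omega> \<Longrightarrow> norm (G x) \<le> B" "B \<ge> 0"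
    using continuous_on_compact_bound[OF cpt G] by blast
  have "\<Omega> \<in> sets borel" using cpt by (simp add: compact_imp_closed)
  then have m: "(\<lambda>x. indicator \<Omega> x *\<^sub>R G x) \<in> borel_measurable borel"
    by (rule borel_measurable_continuous_on_indicator[OF _ G])
  show ?thesis unfolding set_integrable_def
  proof (rule integrable_const_bound[where B=B])
    show "AE x in M. norm (indicator \<Omega> x *\<^sub>R G x) \<le> B"
      using B by (intro AE_I2) (auto simp: indicator_def)
    show "(\<lambda>x. indicator \<Omega> x *\<^sub>R G x) \<in> borel_measurable M"
      using m by (subst measurable_cong_sets[OF sM refl])
  qed
qed

lemma pointwise_bound:
  fixes \<Omega> :: "'a::euclidean_space set"
    and \<mu> \<mu>s :: "'a measure"
    and \<psi> f :: "'a \<Rightarrow> real"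
    and C1 C\<psi> :: real
  assumes cpt: "compact \<Omega>" and cvx: "convex \<Omega>"
    and mu_prob: "prob_space \<mu>" "sets \<mu> = sets borel"
    and C1: "C1 > 0"
      "\<forall>x\<in>\<Omega>. \<forall>\<alpha>. 0 < \<alpha> \<and> \<alpha> \<le> 1 \<longrightarrow>
          measure \<mu> (\<Omega> \<inter> ball x \<alpha>) \<ge> C1 * measure lebesgue (ball x \<alpha>)"
    and ext: "finite_measure \<mu>s" "sets \<mu>s = sets borel"
      "\<forall>A\<in>sets borel. A \<subseteq> \<Omega> \<longrightarrow> emeasure \<mu>s A = emeasure \<mu> A"
      "integrable lborel (fourier_measure \<mu>s)"
    and psi: "continuous_on UNIV \<psi>" "\<forall>x. \<psi> x \<ge> 0"
      "(\<lambda>x. norm x * \<psi> x) integrable_on UNIV"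
      "C\<psi> > 0" "\<forall>x. norm x \<le> 1 \<longrightarrow> \<psi> x \<ge> C\<psi>"
    and f: "continuous_on \<Omega> f"
    and h: "0 < h" "h < 1" and x: "x \<in> \<Omega>"
  shows "\<bar>f x - f_min \<mu> \<Omega> \<psi> h f x\<bar> \<le> (1 + (\<integral>\<xi>. norm (fourier_measure \<mu>s \<xi>) \<partial>lborel) * integral UNIV (\<lambda>x. norm x * \<psi> x)
      / (C\<psi> * C1 * measure lebesgue (ball (0::'a) 1))) * modulus \<Omega> f h"
proof -
  interpret P: prob_space \<mu> by (rule mu_prob(1))
  have finmu: "finite_measure \<mu>" by unfold_locales
  define d where "d = DIM('a)"
  define K where "K = (\<integral>\<xi>. norm (fourier_measure \<mu>s \<xi>) \<partial>lborel)"
  define I1 where "I1 = integral UNIV (\<lambda>x. norm x * \<psi> x)"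
  define V where "V = measure lebesgue (ball (0::'a) 1)"
  have K0: "K \<ge> 0" unfolding K_def by simp
  have I10: "I1 \<ge> 0" unfolding I1_def using psi(2) by (intro integral_nonneg psi(3)) simp
  have V0: "V > 0" unfolding V_def using content_ball_pos[of 1 "0::'a"] by simp
  have \<Omega>borel: "\<Omega> \<in> sets borel" using cpt by (simp add: compact_imp_closed)
  have \<Omega>sets: "\<Omega> \<in> sets \<mu>" using \<Omega>borel mu_prob(2) by simp
  define P where "P y = psi_scaled \<psi> h (x - y)" for y
  have P_eq: "P y = inverse (h ^ d) * \<psi> (inverse h *\<^sub>R (x - y))" for y
    unfolding P_def psi_scaled_def d_def ..
  have P0: "P y \<ge> 0" for y unfolding P_eq using h psi(2) by simp
  have Pc: "continuous_on UNIV P"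
    unfolding P_eq[abs_def] by (intro continuous_intros continuous_on_compose2[OF psi(1)]) auto
  define F where "F y = norm (x - y) / h * P y" for y
  have F0: "F y \<ge> 0" for y unfolding F_def using h P0 by simp
  have Fc: "continuous_on UNIV F"
    unfolding F_def[abs_def] by (intro continuous_intros Pc) (use h in auto)
  define D where "D = (LINT t:\<Omega>|\<mu>. P t)"
  define Nm where "Nm = (LINT y:\<Omega>|\<mu>. f y * P y)"
  define E where "E = (LINT y:\<Omega>|\<mu>. F y)"
  have fmin: "f_min \<mu> \<Omega> \<psi> h f x = Nm / D"
    unfolding f_min_def Nm_def D_def P_def ..
  have intP: "set_integrable \<mu> \<Omega> P"
    by (rule set_integrable_cont[OF finmu mu_prob(2) cpt continuous_on_subset[OF Pc]]) simp
  have intF: "set_integrable \<mu> \<Omega> F"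
    by (rule set_integrable_cont[OF finmu mu_prob(2) cpt continuous_on_subset[OF Fc]]) simp
  have intfP: "set_integrable \<mu> \<Omega> (\<lambda>y. f y * P y)"
    by (rule set_integrable_cont[OF finmu mu_prob(2) cpt]) (intro continuous_intros f continuous_on_subset[OF Pc], simp)
  have DA: "D \<ge> C\<psi> * C1 * V"
  proof -
    define c where "c = inverse (h ^ d) * C\<psi>"
    have c0: "c \<ge> 0" unfolding c_def using h psi(4) by simp
    have spaceU: "space \<mu> = UNIV" using sets_eq_imp_space_eq[OF mu_prob(2)] by simp
    have Bsets: "\<Omega> \<inter> ball x h \<in> sets \<mu>" using \<Omega>borel mu_prob(2) by simp
    have lower: "indicator (\<Omega> \<inter> ball x h) t * c \<le> indicator \<Omega> t * P t" for t
    proof (cases "t \<in> \<Omega> \<inter> ball x h")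
      case True
      then have "dist x t < h" by simp
      then have "norm (inverse h *\<^sub>R (x - t)) \<le> 1"
        using h by (simp add: dist_norm divide_le_eq_1 inverse_eq_divide)
      then have "\<psi> (inverse h *\<^sub>R (x - t)) \<ge> C\<psi>" using psi(5) by blast
      then have "c \<le> P t" unfolding c_def P_eq using h by (intro mult_left_mono) simp_all
      then show ?thesis using True by simp
    next
      case False
      then show ?thesis using P0[of t] by (simp add: indicator_def)
    qed
    have "measure \<mu> (\<Omega> \<inter> ball x h) * c = (\<integral>t. indicator (\<Omega> \<inter> ball x h) t * c \<partial>\<mu>)"
      using spaceU by simp
    also have "\<dots> \<le> (\<integral>t. indicator \<Omega> t * P t \<partial>\<mu>)"
    proof (rule integral_mono[OF _ _ lower])
      show "integrable \<mu> (\<lambda>t. indicator (\<Omega> \<inter> ball x h) t * c)"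
        using Bsets by (intro integrable_mult_left integrable_real_indicator) (simp_all add: less_top[symmetric])
      show "integrable \<mu> (\<lambda>t. indicator \<Omega> t * P t)"
        using intP unfolding set_integrable_def by simp
    qed
    also have "\<dots> = D" unfolding D_def set_lebesgue_integral_def by simp
    finally have D1: "measure \<mu> (\<Omega> \<inter> ball x h) * c \<le> D" .
    have "C1 * measure lebesgue (ball x h) \<le> measure \<mu> (\<Omega> \<inter> ball x h)"
      using C1(2) x h by auto
    moreover have "measure lebesgue (ball x h) = h ^ d * V"
      unfolding V_def d_def using content_ball_conv_unit_ball[of h x] h by simp
    ultimately have "C1 * (h ^ d * V) * c \<le> D"
      using D1 c0 by (metis mult_right_mono order_trans)
    moreover have "C1 * (h ^ d * V) * c = C\<psi> * C1 * V"
      unfolding c_def using h by (simp add: field_simps)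
    ultimately show ?thesis by simp
  qed
  have DB: "\<bar>f x * D - Nm\<bar> \<le> modulus \<Omega> f h * (D + E)"
  proof -
    define w where "w = modulus \<Omega> f h"
    have i1: "integrable \<mu> (\<lambda>y. indicator \<Omega> y * P y)"
      using intP unfolding set_integrable_def by simp
    have i2: "integrable \<mu> (\<lambda>y. indicator \<Omega> y * (f y * P y))"
      using intfP unfolding set_integrable_def by simp
    have i3: "integrable \<mu> (\<lambda>y. indicator \<Omega> y * F y)"
      using intF unfolding set_integrable_def by simp
    have i4: "integrable \<mu> (\<lambda>y. indicator \<Omega> y * ((f x - f y) * P y))"
      using set_integrable_cont[OF finmu mu_prob(2) cpt, of "\<lambda>y. (f x - f y) * P y"]
      unfolding set_integrable_def
      by (simp add: continuous_on_mult continuous_on_diff continuous_on_const f continuous_on_subset[OF Pc])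
    have "f x * D - Nm = (\<integral>y. f x * (indicator \<Omega> y * P y) \<partial>\<mu>) - (\<integral>y. indicator \<Omega> y * (f y * P y) \<partial>\<mu>)"
      unfolding D_def Nm_def set_lebesgue_integral_def by simp
    also have "\<dots> = (\<integral>y. f x * (indicator \<Omega> y * P y) - indicator \<Omega> y * (f y * P y) \<partial>\<mu>)"
      by (rule Bochner_Integration.integral_diff[symmetric]) (intro integrable_mult_right i1, rule i2)
    also have "\<dots> = (\<integral>y. indicator \<Omega> y * ((f x - f y) * P y) \<partial>\<mu>)"
      by (intro Bochner_Integration.integral_cong) (simp_all add: algebra_simps)
    finally have eq: "f x * D - Nm = (\<integral>y. indicator \<Omega> y * ((f x - f y) * P y) \<partial>\<mu>)" .
    have "\<bar>\<integral>y. indicator \<Omega> y * ((f x - f y) * P y) \<partial>\<mu>\<bar> \<le> (\<integral>y. w * (indicator \<Omega> y * P y) + w * (indicator \<Omega> y * F y) \<partial>\<mu>)"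
    proof (rule integral_abs_bound_integral[OF i4])
      show "integrable \<mu> (\<lambda>y. w * (indicator \<Omega> y * P y) + w * (indicator \<Omega> y * F y))"
        by (intro Bochner_Integration.integrable_add integrable_mult_right i1 i3)
      fix y
      show "\<bar>indicator \<Omega> y * ((f x - f y) * P y)\<bar> \<le> w * (indicator \<Omega> y * P y) + w * (indicator \<Omega> y * F y)"
      proof (cases "y \<in> \<Omega>")
        case True
        have "\<bar>indicator \<Omega> y * ((f x - f y) * P y)\<bar> = \<bar>f x - f y\<bar> * P y"
          using True P0[of y] by (simp add: abs_mult)
        also have "\<dots> \<le> (w * (1 + norm (x - y) / h)) * P y"
          unfolding w_def by (rule mult_right_mono[OF modulus_sub[OF cpt cvx f h(1) x True] P0])
        also have "\<dots> = w * (indicator \<Omega> y * P y) + w * (indicator \<Omega> y * F y)"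
          using True by (simp add: F_def algebra_simps)
        finally show ?thesis .
      next
        case False then show ?thesis by simp
      qed
    qed
    also have "\<dots> = w * D + w * E"
      unfolding D_def E_def set_lebesgue_integral_def
      by (subst Bochner_Integration.integral_add) (auto intro: integrable_mult_right i1 i3)
    finally show ?thesis unfolding eq w_def by (simp add: algebra_simps)
  qed
  have DC: "E \<le> K * I1"
  proof -
    have i3: "integrable \<mu> (\<lambda>y. indicator \<Omega> y * F y)"
      using intF unfolding set_integrable_def by simp
    obtain B where B: "\<And>y. y \<in> \<Omega> \<Longrightarrow> norm (F y) \<le> B" "B \<ge> 0"
      using continuous_on_compact_bound[OF cpt continuous_on_subset[OF Fc]] by blast
    define \<phi> where "\<phi> y = min (F y) B" for y
    have \<phi>c: "continuous_on UNIV \<phi>" unfolding \<phi>_def[abs_def] by (intro continuous_intros Fc)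
    have \<phi>0: "\<phi> y \<ge> 0" for y unfolding \<phi>_def using F0 B(2) by simp
    have \<phi>B: "\<phi> y \<le> B" for y unfolding \<phi>_def by simp
    have Fm: "(\<lambda>y. ennreal (F y)) \<in> borel_measurable borel"
      by (intro measurable_compose[OF _ measurable_ennreal] borel_measurable_continuous_onI Fc)
    have Fm_mu: "(\<lambda>y. ennreal (F y)) \<in> borel_measurable \<mu>"
      using Fm by (subst measurable_cong_sets[OF mu_prob(2) refl])
    have Fm_mus: "(\<lambda>y. ennreal (F y)) \<in> borel_measurable \<mu>s"
      using Fm by (subst measurable_cong_sets[OF ext(2) refl])
    have dens: "density \<mu> (indicator \<Omega>) = density \<mu>s (indicator \<Omega>)"
    proof (rule measure_eqI)
      show "sets (density \<mu> (indicator \<Omega>)) = sets (density \<mu>s (indicator \<Omega>))"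
        using mu_prob(2) ext(2) by simp
      fix A assume "A \<in> sets (density \<mu> (indicator \<Omega>))"
      then have A: "A \<in> sets borel" using mu_prob(2) by simp
      have "emeasure (density \<mu> (indicator \<Omega>)) A = emeasure \<mu> (\<Omega> \<inter> A)"
        using A \<Omega>borel mu_prob(2) by (intro emeasure_restricted) simp_all
      also have "\<dots> = emeasure \<mu>s (\<Omega> \<inter> A)"
        using ext(3) A \<Omega>borel by (metis Int_lower1 sets.Int)
      also have "\<dots> = emeasure (density \<mu>s (indicator \<Omega>)) A"
        using A \<Omega>borel ext(2) by (intro emeasure_restricted[symmetric]) simp_all
      finally show "emeasure (density \<mu> (indicator \<Omega>)) A = emeasure (density \<mu>s (indicator \<Omega>)) A" .
    qed
    have "ennreal E = (\<integral>\<^sup>+y. ennreal (indicator \<Omega> y * F y) \<partial>\<mu>)"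
      unfolding E_def set_lebesgue_integral_def
      using i3 F0 by (subst nn_integral_eq_integral) simp_all
    also have "\<dots> = (\<integral>\<^sup>+y. indicator \<Omega> y * ennreal (F y) \<partial>\<mu>)"
      by (intro nn_integral_cong) (simp add: indicator_def)
    also have "\<dots> = (\<integral>\<^sup>+y. ennreal (F y) \<partial>(density \<mu> (indicator \<Omega>)))"
      using \<Omega>sets Fm_mu by (subst nn_integral_density) simp_all
    also have "\<dots> = (\<integral>\<^sup>+y. ennreal (F y) \<partial>(density \<mu>s (indicator \<Omega>)))"
      unfolding dens ..
    also have "\<dots> = (\<integral>\<^sup>+y. indicator \<Omega> y * ennreal (F y) \<partial>\<mu>s)"
      using \<Omega>borel ext(2) Fm_mus by (subst nn_integral_density) simp_all
    also have "\<dots> \<le> (\<integral>\<^sup>+y. ennreal (\<phi> y) \<partial>\<mu>s)"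
    proof (rule nn_integral_mono)
      fix y show "indicator \<Omega> y * ennreal (F y) \<le> ennreal (\<phi> y)"
      proof (cases "y \<in> \<Omega>")
        case True
        then have "\<phi> y = F y" unfolding \<phi>_def using B(1)[OF True] F0[of y] by simp
        then show ?thesis using True by simp
      qed simp
    qed
    also have "\<dots> \<le> ennreal K * (\<integral>\<^sup>+z. ennreal (\<phi> z) \<partial>lborel)"
      unfolding K_def by (rule key_bound[OF ext(1) ext(2) ext(4) \<phi>c \<phi>0 \<phi>B])
    also have "\<dots> \<le> ennreal K * (\<integral>\<^sup>+z. ennreal (F z) \<partial>lborel)"
      by (intro mult_left_mono nn_integral_mono ennreal_leI) (simp_all add: \<phi>_def)
    also have "(\<integral>\<^sup>+z. ennreal (F z) \<partial>lborel) = ennreal I1"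
    proof -
      have hne: "-h \<noteq> 0" using h by simp
      have "(\<integral>\<^sup>+z. ennreal (F z) \<partial>lborel) = ennreal (\<bar>-h\<bar> ^ DIM('a)) * (\<integral>\<^sup>+w. ennreal (F (x + (-h) *\<^sub>R w)) \<partial>lborel)"
        by (rule nn_integral_shift_scale'[OF hne Fm])
      also have "\<dots> = (\<integral>\<^sup>+w. ennreal (h ^ d) * ennreal (F (x + (-h) *\<^sub>R w)) \<partial>lborel)"
        using h unfolding d_def
        by (subst nn_integral_cmult) (simp_all add: measurable_compose[OF _ Fm])
      also have "\<dots> = (\<integral>\<^sup>+w. ennreal (norm w * \<psi> w) \<partial>lborel)"
      proof (rule nn_integral_cong)
        fix w :: 'a
        have "F (x + (-h) *\<^sub>R w) = inverse (h ^ d) * (norm w * \<psi> w)"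
          unfolding F_def P_eq using h by (simp add: field_simps)
        then have "h ^ d * F (x + (-h) *\<^sub>R w) = norm w * \<psi> w"
          using h by simp
        moreover have "h ^ d \<ge> 0" using h by simp
        ultimately show "ennreal (h ^ d) * ennreal (F (x + (-h) *\<^sub>R w)) = ennreal (norm w * \<psi> w)"
          using F0 by (simp add: ennreal_mult[symmetric])
      qed
      also have "\<dots> = (\<integral>\<^sup>+w. ennreal (norm w * \<psi> w) * indicator UNIV w \<partial>lborel)"
        by simp
      also have "\<dots> = ennreal I1"
        unfolding I1_def using psi(2)
        by (intro nn_integral_has_integral_lebesgue' integrable_integral psi(3)) simp
      finally show ?thesis .
    qed
    finally have "ennreal E \<le> ennreal (K * I1)"
      using K0 I10 by (simp add: ennreal_mult)
    then show ?thesis using K0 I10 by (simp add: ennreal_le_iff)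
  qed
  have Dpos: "D > 0" using DA psi(4) C1(1) V0 by (meson less_le_trans mult_pos_pos)
  have w0: "modulus \<Omega> f h \<ge> 0" using modulus_nonneg[OF cpt f x] h by simp
  have "\<bar>f x - f_min \<mu> \<Omega> \<psi> h f x\<bar> = \<bar>f x * D - Nm\<bar> / D"
    unfolding fmin using Dpos by (simp add: field_simps)
  also have "\<dots> \<le> modulus \<Omega> f h * (D + E) / D"
    using DB Dpos by (simp add: divide_right_mono)
  also have "\<dots> = modulus \<Omega> f h * (1 + E / D)"
    using Dpos by (simp add: field_simps)
  also have "\<dots> \<le> modulus \<Omega> f h * (1 + K * I1 / (C\<psi> * C1 * V))"
  proof (rule mult_left_mono[OF _ w0])
    have E0: "E \<ge> 0" unfolding E_def set_lebesgue_integral_def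
      using F0 by (intro Bochner_Integration.integral_nonneg) (simp add: indicator_def)
    have "E / D \<le> K * I1 / (C\<psi> * C1 * V)"
      by (rule frac_le) (use DC DA E0 K0 I10 psi(4) C1(1) V0 in auto)
    then show "1 + E / D \<le> 1 + K * I1 / (C\<psi> * C1 * V)" by simp
  qed
  finally show ?thesis unfolding K_def I1_def V_def by (simp add: mult.commute)
qed

lemma fmin_meas:
  fixes \<Omega> :: "'a::euclidean_space set"
    and \<mu> :: "'a measure"
    and \<psi> f :: "'a \<Rightarrow> real"
  assumes cpt: "compact \<Omega>" and mu_prob: "prob_space \<mu>" "sets \<mu> = sets borel"
    and psi: "continuous_on UNIV \<psi>"
    and f: "continuous_on \<Omega> f" and h: "0 < h"
  shows "(\<lambda>x. ereal \<bar>f x - f_min \<mu> \<Omega> \<psi> h f x\<bar>) \<in> borel_measurable (restrict_space lebesgue \<Omega>)"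
proof -
  interpret P: prob_space \<mu> by (rule mu_prob(1))
  have \<Omega>borel: "\<Omega> \<in> sets borel" using cpt by (simp add: compact_imp_closed)
  define H where "H = psi_scaled \<psi> h"
  have Hc: "continuous_on UNIV H"
    unfolding H_def psi_scaled_def[abs_def] by (intro continuous_intros continuous_on_compose2[OF psi]) auto
  have Hm: "H \<in> borel_measurable borel" by (rule borel_measurable_continuous_onI[OF Hc])
  have sets_eq: "sets (borel \<Otimes>\<^sub>M \<mu>) = sets (borel \<Otimes>\<^sub>M (borel :: 'a measure))"
    by (rule sets_pair_measure_cong) (simp_all add: mu_prob(2))
  have int_meas: "(\<lambda>x. \<integral>y. G y * H (x - y) \<partial>\<mu>) \<in> borel_measurable borel"
    if Gm: "G \<in> borel_measurable borel" for G :: "'a \<Rightarrow> real"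
  proof -
    have m1: "(\<lambda>p. G (snd p)) \<in> borel_measurable (borel \<Otimes>\<^sub>M (borel :: 'a measure))"
      by (rule measurable_compose[OF measurable_snd Gm])
    have m2: "(\<lambda>p. H (fst p - snd p)) \<in> borel_measurable (borel \<Otimes>\<^sub>M (borel :: 'a measure))"
      by (rule measurable_compose[OF borel_measurable_diff[OF measurable_fst measurable_snd] Hm])
    have "(\<lambda>p. G (snd p) * H (fst p - snd p)) \<in> borel_measurable (borel \<Otimes>\<^sub>M (borel :: 'a measure))"
      by (rule borel_measurable_times[OF m1 m2])
    then have "case_prod (\<lambda>x y. G y * H (x - y)) \<in> borel_measurable (borel \<Otimes>\<^sub>M \<mu>)"
      by (subst measurable_cong_sets[OF sets_eq refl]) (simp add: case_prod_beta')
    then show ?thesis by (rule P.borel_measurable_lebesgue_integral)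
  qed
  have Gf: "(\<lambda>y. indicator \<Omega> y * f y) \<in> borel_measurable borel"
    using borel_measurable_continuous_on_indicator[OF \<Omega>borel f] by simp
  have Gi: "(\<lambda>y. indicator \<Omega> y :: real) \<in> borel_measurable borel"
    using \<Omega>borel by simp
  have N: "(\<lambda>x. \<integral>y. (indicator \<Omega> y * f y) * H (x - y) \<partial>\<mu>) \<in> borel_measurable borel"
    by (rule int_meas[OF Gf])
  have D: "(\<lambda>x. \<integral>y. indicator \<Omega> y * H (x - y) \<partial>\<mu>) \<in> borel_measurable borel"
    by (rule int_meas[OF Gi])
  have fmin_eq: "f_min \<mu> \<Omega> \<psi> h f x = (\<integral>y. (indicator \<Omega> y * f y) * H (x - y) \<partial>\<mu>) / (\<integral>y. indicator \<Omega> y * H (x - y) \<partial>\<mu>)" for x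
    unfolding f_min_def set_lebesgue_integral_def H_def by (simp add: mult.assoc)
  define g where "g x = ereal \<bar>indicator \<Omega> x * f x - (\<integral>y. (indicator \<Omega> y * f y) * H (x - y) \<partial>\<mu>) / (\<integral>y. indicator \<Omega> y * H (x - y) \<partial>\<mu>)\<bar>" for x
  have gm: "g \<in> borel_measurable borel"
    unfolding g_def[abs_def]
    by (intro borel_measurable_ereal borel_measurable_abs borel_measurable_diff borel_measurable_divide Gf N D)
  then have "g \<in> borel_measurable lebesgue"
    by (intro measurable_completion) simp
  then have "g \<in> borel_measurable (restrict_space lebesgue \<Omega>)"
    by (rule measurable_restrict_space1)
  moreover have "g x = ereal \<bar>f x - f_min \<mu> \<Omega> \<psi> h f x\<bar>" if "x \<in> space (restrict_space lebesgue \<Omega>)" for x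
    using that unfolding g_def fmin_eq by (simp add: space_restrict_space)
  ultimately show ?thesis
    using measurable_cong[of "restrict_space lebesgue \<Omega>" g "\<lambda>x. ereal \<bar>f x - f_min \<mu> \<Omega> \<psi> h f x\<bar>" borel] by blast
qed

theorem theorem3p2:
  fixes \<Omega> :: "'a::euclidean_space set"
    and \<mu> \<mu>s :: "'a measure"
    and \<psi> f :: "'a \<Rightarrow> real"
    and C1 C\<psi> :: real
  assumes dom: "compact \<Omega>" "convex \<Omega>" "interior \<Omega> \<noteq> {}" "lipschitz_boundary \<Omega>"
    and mu_prob: "prob_space \<mu>" "sets \<mu> = sets borel" "emeasure \<mu> \<Omega> = 1"
    and C1: "C1 > 0"
      "\<forall>x\<in>\<Omega>. \<forall>\<alpha>. 0 < \<alpha> \<and> \<alpha> \<le> 1 \<longrightarrow>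
          measure \<mu> (\<Omega> \<inter> ball x \<alpha>) \<ge> C1 * measure lebesgue (ball x \<alpha>)"
    and ext: "finite_measure \<mu>s" "sets \<mu>s = sets borel"
      "\<forall>A\<in>sets borel. A \<subseteq> \<Omega> \<longrightarrow> emeasure \<mu>s A = emeasure \<mu> A"
      "integrable lborel (fourier_measure \<mu>s)"
    and psi: "continuous_on UNIV \<psi>" "\<forall>x. \<psi> x \<ge> 0" "(\<psi> has_integral 1) UNIV"
      "(\<lambda>x. norm x * \<psi> x) integrable_on UNIV"
      "C\<psi> > 0" "\<forall>x. norm x \<le> 1 \<longrightarrow> \<psi> x \<ge> C\<psi>"
    and f: "continuous_on \<Omega> f"
  shows "\<exists>C>0. \<forall>h. 0 < h \<and> h < 1 \<longrightarrow>
           (\<forall>p::real. p \<ge> 1 \<longrightarrow>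
              Lp_norm \<Omega> (\<lambda>x. f x - f_min \<mu> \<Omega> \<psi> h f x) p \<le> C * modulus \<Omega> f h) \<and>
           Linf_norm \<Omega> (\<lambda>x. f x - f_min \<mu> \<Omega> \<psi> h f x) \<le> ereal (C * modulus \<Omega> f h)"
proof -
  interpret P: prob_space \<mu> by (rule mu_prob(1))
  obtain x0 where x0: "x0 \<in> \<Omega>" using dom(3) interior_subset by blast
  have \<Omega>borel: "\<Omega> \<in> sets borel" using dom(1) by (simp add: compact_imp_closed)
  have \<Omega>fin: "emeasure lebesgue \<Omega> < \<infinity>"
    using emeasure_compact_finite[OF dom(1)] \<Omega>borel by (simp add: emeasure_completion)
  define K where "K = (\<integral>\<xi>. norm (fourier_measure \<mu>s \<xi>) \<partial>lborel)"
  define I1 where "I1 = integral UNIV (\<lambda>x. norm x * \<psi> x)"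
  define V where "V = measure lebesgue (ball (0::'a) 1)"
  have K0: "K \<ge> 0" unfolding K_def by simp
  have I10: "I1 \<ge> 0" unfolding I1_def using psi(2) by (intro integral_nonneg psi(4)) simp
  have V0: "V > 0" unfolding V_def using content_ball_pos[of 1 "0::'a"] by simp
  define C0 where "C0 = 1 + K * I1 / (C\<psi> * C1 * V)"
  have C01: "C0 \<ge> 1" unfolding C0_def using K0 I10 V0 C1(1) psi(5) by simp
  have pointwise: "\<bar>f x - f_min \<mu> \<Omega> \<psi> h f x\<bar> \<le> C0 * modulus \<Omega> f h"
    if "0 < h" "h < 1" "x \<in> \<Omega>" for h x
    using pointwise_bound[OF dom(1) dom(2) mu_prob(1) mu_prob(2) C1 ext psi(1) psi(2) psi(4) psi(5) psi(6) f that]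
    unfolding C0_def K_def I1_def V_def .
  have meas: "(\<lambda>x. ereal \<bar>f x - f_min \<mu> \<Omega> \<psi> h f x\<bar>) \<in> borel_measurable (restrict_space lebesgue \<Omega>)"
    if "0 < h" for h
    by (rule fmin_meas[OF dom(1) mu_prob(1) mu_prob(2) psi(1) f that])
  define m where "m = measure lebesgue \<Omega>"
  have m0: "m \<ge> 0" unfolding m_def by simp
  define C where "C = C0 * max 1 m"
  have Cpos: "C > 0" unfolding C_def using C01 by (simp add: less_max_iff_disj)
  have CC0: "C0 \<le> C" unfolding C_def using C01 by simp
  show ?thesis
  proof (intro exI[of _ C] conjI Cpos allI impI)
    fix h :: real assume h: "0 < h \<and> h < 1"
    define W where "W = C0 * modulus \<Omega> f h"
    have w0: "modulus \<Omega> f h \<ge> 0" using modulus_nonneg[OF dom(1) f x0] h by simp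
    have W0: "W \<ge> 0" unfolding W_def using w0 C01 by simp
    have WC: "W \<le> C * modulus \<Omega> f h" unfolding W_def using CC0 w0 by (simp add: mult_right_mono)
    have pw: "\<bar>f x - f_min \<mu> \<Omega> \<psi> h f x\<bar> \<le> W" if "x \<in> \<Omega>" for x
      unfolding W_def using pointwise[of h x] h that by simp
    show "Linf_norm \<Omega> (\<lambda>x. f x - f_min \<mu> \<Omega> \<psi> h f x) \<le> ereal (C * modulus \<Omega> f h)"
      unfolding Linf_norm_def
    proof (rule esssup_I[OF meas])
      show "0 < h" using h by simp
      show "AE x in restrict_space lebesgue \<Omega>. ereal \<bar>f x - f_min \<mu> \<Omega> \<psi> h f x\<bar> \<le> ereal (C * modulus \<Omega> f h)"
        by (rule AE_I2) (use pw WC \<Omega>borel in \<open>auto simp: space_restrict_space intro: order_trans\<close>)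
    qed
    fix p :: real assume p: "p \<ge> 1"
    define g where "g x = \<bar>f x - f_min \<mu> \<Omega> \<psi> h f x\<bar> powr p" for x
    show "Lp_norm \<Omega> (\<lambda>x. f x - f_min \<mu> \<Omega> \<psi> h f x) p \<le> C * modulus \<Omega> f h"
    proof (cases "set_integrable lebesgue \<Omega> g")
      case True
      have cint: "set_integrable lebesgue \<Omega> (\<lambda>_. W powr p)"
        unfolding set_integrable_def
        using integrable_real_indicator[of \<Omega> lebesgue] \<Omega>borel \<Omega>fin by simp
      have "(LINT x:\<Omega>|lebesgue. g x) \<le> (LINT x:\<Omega>|lebesgue. W powr p)"
        by (rule set_integral_mono[OF True cint]) (use pw p in \<open>auto simp: g_def intro: powr_mono2\<close>)
      also have "\<dots> = m * W powr p"
        unfolding m_def using \<Omega>borel \<Omega>fin by (subst set_integral_const) simp_all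
      finally have le: "(LINT x:\<Omega>|lebesgue. g x) \<le> m * W powr p" .
      have gnn: "0 \<le> (LINT x:\<Omega>|lebesgue. g x)"
        unfolding set_lebesgue_integral_def g_def by (intro Bochner_Integration.integral_nonneg) (simp add: indicator_def)
      have "Lp_norm \<Omega> (\<lambda>x. f x - f_min \<mu> \<Omega> \<psi> h f x) p = (LINT x:\<Omega>|lebesgue. g x) powr (1 / p)"
        unfolding Lp_norm_def g_def ..
      also have "\<dots> \<le> (m * W powr p) powr (1 / p)"
        using le p gnn by (intro powr_mono2) simp_all
      also have "\<dots> = m powr (1 / p) * W"
        using p W0 by (simp add: powr_mult powr_powr)
      also have "\<dots> \<le> max 1 m * W"
      proof (rule mult_right_mono[OF _ W0])
        show "m powr (1 / p) \<le> max 1 m"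
        proof (cases "m \<le> 1")
          case True then show ?thesis using m0 p by (simp add: powr_le1)
        next
          case False
          then have "m powr (1 / p) \<le> m powr 1" using p by (intro powr_mono) simp_all
          then show ?thesis using False by simp
        qed
      qed
      also have "\<dots> = C * modulus \<Omega> f h" unfolding C_def W_def by simp
      finally show ?thesis .
    next
      case False
      then have "(LINT x:\<Omega>|lebesgue. g x) = 0"
        unfolding set_integrable_def set_lebesgue_integral_def by (rule not_integrable_integral_eq)
      then have "Lp_norm \<Omega> (\<lambda>x. f x - f_min \<mu> \<Omega> \<psi> h f x) p = 0"
        unfolding Lp_norm_def g_def by simp
      then show ?thesis using C01 w0 Cpos by simp
    qed
  qed
qed


end
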